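(* Let $n>2$ be an integer, $a\in\mathbb{R}$ with $a\ne0$, and for $c\in\mathbb{R}$ let \[\lambda_\pm(c)=\tfrac12\Bigl(2a-(n-1)c\pm\sqrt{\bigl(2a+(n+1)c\bigr)^2+4n}\Bigr),\qquad \lambda_{\lim}(c)=c-2a.\] Put $\varphi=2\pi/n$, $q=\lfloor n/2\rfloor$ and $c_k=\dfrac{4a^2\cos(k\varphi)(1-\cos(k\varphi))+n}{2(n+1)a(\cos(k\varphi)-1)}$ for $k=1,\dots,q$. If $a>0$, let $c_-$ be the abscissa of the point where $\lambda_-(c)=\lambda_{\lim}(c)$; if $a<0$, let $c_+$ be the abscissa of the point where $\lambda_+(c)=\lambda_{\lim}(c)$. Then all $c_k$, $k=1,\dots,q$, lie in $(-\infty,c_-]$ when $a>0$, and in $[c_+,\infty)$ when $a<0$.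
   Context: $\lambda_\pm(c)$ and $c+2a\cos(k\varphi)$ are the eigenvalues of the $(n+1)\times(n+1)$ symmetric matrix $m_n(a,\pm1,c)$ (rows/columns indexed $0,\dots,n$, $(0,0)$-entry $-nc$, $(0,j)$- and $(j,0)$-entries $\pm1$, lower-right block $\mathrm{circ}(c,a,0,\dots,0,a)$); $c_k$ is the abscissa at which the curve $\lambda=c+2a\cos(k\varphi)$ meets $\lambda=\lambda_-(c)$ (if $a>0$) or $\lambda=\lambda_+(c)$ (if $a<0$). *)

theory Defs
  imports Complex_Main
begin

definition lam_plus :: "nat \<Rightarrow> real \<Rightarrow> real \<Rightarrow> real" where
  "lam_plus n a c = (2*a - (real n - 1)*c + sqrt ((2*a + (real n + 1)*c)^2 + 4 * real n)) / 2"

definition lam_minus :: "nat \<Rightarrow> real \<Rightarrow> real \<Rightarrow> real" where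
  "lam_minus n a c = (2*a - (real n - 1)*c - sqrt ((2*a + (real n + 1)*c)^2 + 4 * real n)) / 2"

definition lam_lim :: "real \<Rightarrow> real \<Rightarrow> real" where
  "lam_lim a c = c - 2*a"

definition ck :: "nat \<Rightarrow> real \<Rightarrow> nat \<Rightarrow> real" where
  "ck n a k = (let t = cos (real k * (2*pi / real n)) in
     (4*a^2*t*(1 - t) + real n) / (2*(real n + 1)*a*(t - 1)))"

end

theory Submission
  imports Defs
begin

lemma minus_iff:
  fixes a c N :: real
  assumes a: "a > 0" and N: "N > 0"
  shows "((2*a - (N - 1)*c - sqrt ((2*a + (N + 1)*c)^2 + 4 * N)) / 2 = c - 2*a)
     \<longleftrightarrow> c = (8*a^2 - N) / (4*a*(N+1))"
proof
  assume h: "(2*a - (N - 1)*c - sqrt ((2*a + (N + 1)*c)^2 + 4 * N)) / 2 = c - 2*a"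
  hence "sqrt ((2*a + (N + 1)*c)^2 + 4 * N) = 6*a - (N+1)*c" by (simp add: field_simps)
  hence "(2*a + (N + 1)*c)^2 + 4 * N = (6*a - (N+1)*c)^2"
    by (metis N add_nonneg_nonneg less_eq_real_def real_sqrt_pow2 zero_le_mult_iff zero_le_numeral zero_le_power2)
  hence "16*a*((N+1)*c) = 32*a^2 - 4*N" by (simp add: power2_eq_square algebra_simps)
  moreover have d: "4*a*(N+1) \<noteq> 0" using a N by auto
  ultimately show "c = (8*a^2 - N) / (4*a*(N+1))"
    by (simp add: eq_divide_eq power2_eq_square algebra_simps)
next
  assume c: "c = (8*a^2 - N) / (4*a*(N+1))"
  have d: "N+1 \<noteq> 0" "a \<noteq> 0" using a N by auto
  have "(N+1)*c = ((N+1)*(8*a^2 - N)) / ((N+1)*(4*a))" unfolding c by (simp add: mult.commute)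
  also have "\<dots> = (8*a^2 - N) / (4*a)" using d(1) by (rule nonzero_mult_divide_mult_cancel_left)
  also have "\<dots> = 2*a - N/(4*a)" using d by (simp add: field_simps power2_eq_square)
  finally have u: "(N+1)*c = 2*a - N/(4*a)" .
  have "(2*a + (N + 1)*c)^2 + 4 * N = (4*a + N/(4*a))^2"
    unfolding u using a by (simp add: field_simps power2_eq_square)
  moreover have "4*a + N/(4*a) \<ge> 0" using a N by simp
  ultimately have "sqrt ((2*a + (N + 1)*c)^2 + 4 * N) = 4*a + N/(4*a)" by simp
  thus "(2*a - (N - 1)*c - sqrt ((2*a + (N + 1)*c)^2 + 4 * N)) / 2 = c - 2*a"
    using u by (simp add: field_simps)
qed

lemma plus_iff:
  fixes a c N :: real
  assumes a: "a < 0" and N: "N > 0"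
  shows "((2*a - (N - 1)*c + sqrt ((2*a + (N + 1)*c)^2 + 4 * N)) / 2 = c - 2*a)
     \<longleftrightarrow> c = (8*a^2 - N) / (4*a*(N+1))"
proof
  assume h: "(2*a - (N - 1)*c + sqrt ((2*a + (N + 1)*c)^2 + 4 * N)) / 2 = c - 2*a"
  hence "sqrt ((2*a + (N + 1)*c)^2 + 4 * N) = (N+1)*c - 6*a" by (simp add: field_simps)
  hence "(2*a + (N + 1)*c)^2 + 4 * N = ((N+1)*c - 6*a)^2"
    by (metis N add_nonneg_nonneg less_eq_real_def real_sqrt_pow2 zero_le_mult_iff zero_le_numeral zero_le_power2)
  hence "16*a*((N+1)*c) = 32*a^2 - 4*N" by (simp add: power2_eq_square algebra_simps)
  moreover have d: "4*a*(N+1) \<noteq> 0" using a N by auto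
  ultimately show "c = (8*a^2 - N) / (4*a*(N+1))"
    by (simp add: eq_divide_eq power2_eq_square algebra_simps)
next
  assume c: "c = (8*a^2 - N) / (4*a*(N+1))"
  have d: "N+1 \<noteq> 0" "a \<noteq> 0" using a N by auto
  have "(N+1)*c = ((N+1)*(8*a^2 - N)) / ((N+1)*(4*a))" unfolding c by (simp add: mult.commute)
  also have "\<dots> = (8*a^2 - N) / (4*a)" using d(1) by (rule nonzero_mult_divide_mult_cancel_left)
  also have "\<dots> = 2*a - N/(4*a)" using d by (simp add: field_simps power2_eq_square)
  finally have u: "(N+1)*c = 2*a - N/(4*a)" .
  have "(2*a + (N + 1)*c)^2 + 4 * N = (-4*a - N/(4*a))^2"
    unfolding u using a by (simp add: field_simps power2_eq_square)
  moreover have "-4*a - N/(4*a) \<ge> 0"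
  proof -
    have "N/(4*a) \<le> 0" using a N by (intro divide_nonneg_neg) auto
    thus ?thesis using a by simp
  qed
  ultimately have "sqrt ((2*a + (N + 1)*c)^2 + 4 * N) = -4*a - N/(4*a)" by simp
  thus "(2*a - (N - 1)*c + sqrt ((2*a + (N + 1)*c)^2 + 4 * N)) / 2 = c - 2*a"
    using u by (simp add: field_simps)
qed

lemma key_ineq:
  fixes a t N :: real
  assumes N: "N > 0" and t1: "t < 1" and t2: "-1 \<le> t"
  shows "(4*a^2*t*(1-t) + N)/(t-1) \<le> (8*a^2 - N)/2"
proof -
  define s where "s = 1 - t"
  have s: "0 < s" "s \<le> 2" using t1 t2 s_def by auto
  have e: "(4*a^2*t*(1-t) + N)/(t-1) = -4*a^2*(1-s) - N/s"
    using s by (simp add: s_def field_simps)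
  have "4*a^2*(s-2) \<le> 0" using s by (simp add: mult_nonneg_nonpos)
  moreover have "N/2 \<le> N/s" using s N by (intro divide_left_mono) auto
  hence "N/s - N/2 \<ge> 0" by simp
  ultimately show ?thesis unfolding e by (simp add: algebra_simps)
qed

lemma cos_range:
  assumes "n > 2" "k \<in> {1..n div 2}"
  shows "cos (real k * (2*pi / real n)) < 1"
proof -
  have "real k * 2 \<le> real n" using assms by auto
  hence le: "real k * (2*pi / real n) \<le> pi" using assms by (simp add: field_simps)
  have gt: "0 < real k * (2*pi / real n)" using assms by auto
  have "cos (real k * (2*pi / real n)) < cos 0"
    by (rule cos_monotone_0_pi) (use le gt in auto)
  thus ?thesis by simp
qed

theorem corollary3:
  fixes n :: nat and a :: real
  assumes "n > 2" and "a \<noteq> 0"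
  shows "(a > 0 \<longrightarrow>
            (\<exists>!c. lam_minus n a c = lam_lim a c) \<and>
            (\<forall>k \<in> {1..n div 2}. ck n a k \<le> (THE c. lam_minus n a c = lam_lim a c)))
       \<and> (a < 0 \<longrightarrow>
            (\<exists>!c. lam_plus n a c = lam_lim a c) \<and>
            (\<forall>k \<in> {1..n div 2}. (THE c. lam_plus n a c = lam_lim a c) \<le> ck n a k))"
proof -
  define N where "N = real n"
  have N: "N > 0" using assms N_def by simp
  define c0 where "c0 = (8*a^2 - N) / (4*a*(N+1))"
  have K: "(4*a^2*t*(1-t) + N)/(2*(N+1)*a*(t-1)) \<le> c0" if "t < 1" "-1 \<le> t" "a > 0" for t
  proof -
    have "(4*a^2*t*(1-t) + N)/(t-1) \<le> (8*a^2 - N)/2" by (rule key_ineq) (use N that in auto)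
    hence "(4*a^2*t*(1-t) + N)/(t-1) / (2*(N+1)*a) \<le> (8*a^2 - N)/2 / (2*(N+1)*a)"
      using N that by (intro divide_right_mono) auto
    thus ?thesis unfolding c0_def using N that by (simp add: field_simps)
  qed
  have K2: "c0 \<le> (4*a^2*t*(1-t) + N)/(2*(N+1)*a*(t-1))" if "t < 1" "-1 \<le> t" "a < 0" for t
  proof -
    have "(4*a^2*t*(1-t) + N)/(t-1) \<le> (8*a^2 - N)/2" by (rule key_ineq) (use N that in auto)
    hence "(8*a^2 - N)/2 / (2*(N+1)*a) \<le> (4*a^2*t*(1-t) + N)/(t-1) / (2*(N+1)*a)"
      using N that mult_pos_neg[of "2*(N+1)" a] by (intro divide_right_mono_neg) auto
    thus ?thesis unfolding c0_def using N that by (simp add: field_simps)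
  qed
  show ?thesis
  proof (intro conjI impI)
    assume a: "a > 0"
    have iff: "lam_minus n a c = lam_lim a c \<longleftrightarrow> c = c0" for c
      unfolding lam_minus_def lam_lim_def c0_def N_def using minus_iff[OF a, of "real n"] assms by simp
    show "\<exists>!c. lam_minus n a c = lam_lim a c" using iff by auto
    have th: "(THE c. lam_minus n a c = lam_lim a c) = c0" using iff by auto
    show "\<forall>k \<in> {1..n div 2}. ck n a k \<le> (THE c. lam_minus n a c = lam_lim a c)"
      unfolding th
    proof
      fix k assume k: "k \<in> {1..n div 2}"
      show "ck n a k \<le> c0" unfolding ck_def Let_def N_def[symmetric]
        using K[OF cos_range[OF assms(1) k] _ a] by (simp add: N_def)
    qed
  next
    assume a: "a < 0"
    have iff: "lam_plus n a c = lam_lim a c \<longleftrightarrow> c = c0" for c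
      unfolding lam_plus_def lam_lim_def c0_def N_def using plus_iff[OF a, of "real n"] assms by simp
    show "\<exists>!c. lam_plus n a c = lam_lim a c" using iff by auto
    have th: "(THE c. lam_plus n a c = lam_lim a c) = c0" using iff by auto
    show "\<forall>k \<in> {1..n div 2}. (THE c. lam_plus n a c = lam_lim a c) \<le> ck n a k"
      unfolding th
    proof
      fix k assume k: "k \<in> {1..n div 2}"
      show "c0 \<le> ck n a k" unfolding ck_def Let_def N_def[symmetric]
        using K2[OF cos_range[OF assms(1) k] _ a] by (simp add: N_def)
    qed
  qed
qed

end
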